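(* There is a constant $C>0$ depending only on $n,\alpha_1,\dots,\alpha_n$ such that for all $R\ge1$, all $f\in L^2(\mathbb{R}^n)$ with $\operatorname{supp}\widehat f\subset B^n_1(0)$ (with the associated sets $X_{\lambda,\eta}$ as in the context), all dyadic $1\le\lambda\le R$ and all dyadic $\eta\ge1$, $$\phi_{X_{\lambda,\eta},n,R}\le C\,\eta^{-1}\max\{1,R^{1-2\alpha}\lambda^{\alpha-1}\}.$$
   Context: Fix $n\ge1$, $\alpha_1,\dots,\alpha_n>0$, $\alpha=\min_j\alpha_j<\tfrac12$. $e^{it\Delta}f(x)=\int_{\mathbb{R}^n}e^{2\pi i x\cdot\xi}e^{4\pi^2 i t|\xi|^2}\widehat f(\xi)\,d\xi$. For $R\ge1$, $\theta(t)=\big(R^{1-2\alpha_1}t^{\alpha_1},\dots,R^{1-2\alpha_n}t^{\alpha_n}\big)$, $0\le t\le R$. A lattice cube is a set $\prod_{i=1}^{n+1}[m_i,m_i+1)\subset\mathbb{R}^{n+1}$ with $m\in\mathbb{Z}^{n+1}$. Given $f$, for each $j\in\mathbb{Z}^n$ with $|j|\le R$ choose $t_j\in[1,R]$ with $\sup_{1<t<R}|e^{it\Delta}f(j+\theta(t))|\le 2|e^{it_j\Delta}f(j+\theta(t_j))|$, and let $\widetilde Q_j$ be the lattice cube containing $(j+\theta(t_j),t_j)$. Set $X=(B^n_R(0)\times[1,R])\cap\bigcup_{|j|\le R}\widetilde Q_j$, and for dyadic $1\le\lambda\le R$, $X_\lambda=X\cap(\mathbb{R}^n\times[\lambda,2\lambda])$.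 For dyadic $\eta\ge1$, $\mathcal F_\eta$ is the collection of lattice cubes $\widetilde Q$ with $\eta\le\#\{y\in B^n_R(0)\cap\mathbb{Z}^n:\widetilde Q=\widetilde Q_y\}<2\eta$, and $X_{\lambda,\eta}=X_\lambda\cap\bigcup_{\widetilde Q\in\mathcal F_\eta}\widetilde Q$. For a union $Y$ of lattice cubes, $1\le\beta\le n+1$ and $R\ge1$, the density is $$\phi_{Y,\beta,R}=\sup\Big\{\frac{\#\{\widetilde Q\subset Y\text{ lattice cube}:\widetilde Q\subset B^{n+1}_r(x',t')\}}{r^\beta}:\ (x',t')\in\mathbb{R}^{n+1},\ r\ge1,\ B^{n+1}_r(x',t')\subset B^{n+1}_R(0)\Big\},$$ where $B^{n+1}_r(x',t')$ is the Euclidean ball in $\mathbb{R}^{n+1}$ of radius $r$ centered at $(x',t')$. *)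

theory Defs
  imports "HOL-Analysis.Analysis"
begin

text \<open>Points of R^(n+1) are represented as pairs (x,t) with x in R^n (type real^'n) and t real;
  the norm on the product type is the Euclidean one.\<close>

text \<open>Schroedinger evolution, expressed through g = the Fourier transform of f.\<close>
definition schr :: "(real^'n \<Rightarrow> complex) \<Rightarrow> real \<Rightarrow> real^'n \<Rightarrow> complex" where
  "schr g t x = (LINT \<xi>|lebesgue.
      exp (\<i> * complex_of_real (2 * pi * (x \<bullet> \<xi>))) *
      exp (\<i> * complex_of_real (4 * pi^2 * t * (norm \<xi>)^2)) * g \<xi>)"

definition theta :: "('n \<Rightarrow> real) \<Rightarrow> real \<Rightarrow> real \<Rightarrow> real^'n" where
  "theta a R t = (\<chi> i. R powr (1 - 2 * a i) * t powr (a i))"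

definition lattice_cube :: "(int^'n) \<times> int \<Rightarrow> ((real^'n) \<times> real) set" where
  "lattice_cube m = {p. (\<forall>i. real_of_int (fst m $ i) \<le> fst p $ i \<and> fst p $ i < real_of_int (fst m $ i) + 1)
      \<and> real_of_int (snd m) \<le> snd p \<and> snd p < real_of_int (snd m) + 1}"

definition lattice_cubes :: "((real^'n) \<times> real) set set" where
  "lattice_cubes = range lattice_cube"

definition cube_of :: "(real^'n) \<times> real \<Rightarrow> ((real^'n) \<times> real) set" where
  "cube_of p = lattice_cube (\<chi> i. \<lfloor>fst p $ i\<rfloor>, \<lfloor>snd p\<rfloor>)"

definition ivec :: "int^'n \<Rightarrow> real^'n" where
  "ivec j = (\<chi> i. real_of_int (j $ i))"

definition good_choice :: "('n \<Rightarrow> real) \<Rightarrow> real \<Rightarrow> (real^'n \<Rightarrow> complex) \<Rightarrow> (int^'n \<Rightarrow> real) \<Rightarrow> bool" where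
  "good_choice a R g tc = (\<forall>j. norm (ivec j) \<le> R \<longrightarrow>
      tc j \<in> {1..R} \<and>
      (\<forall>t\<in>{1<..<R}. norm (schr g t (ivec j + theta a R t))
          \<le> 2 * norm (schr g (tc j) (ivec j + theta a R (tc j)))))"

definition Qt :: "('n \<Rightarrow> real) \<Rightarrow> real \<Rightarrow> (int^'n \<Rightarrow> real) \<Rightarrow> int^'n \<Rightarrow> ((real^'n) \<times> real) set" where
  "Qt a R tc j = cube_of (ivec j + theta a R (tc j), tc j)"

definition Xset :: "('n \<Rightarrow> real) \<Rightarrow> real \<Rightarrow> (int^'n \<Rightarrow> real) \<Rightarrow> ((real^'n) \<times> real) set" where
  "Xset a R tc = (ball 0 R \<times> {1..R}) \<inter> (\<Union>j\<in>{j. norm (ivec j) \<le> R}. Qt a R tc j)"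

definition Xlam :: "('n \<Rightarrow> real) \<Rightarrow> real \<Rightarrow> (int^'n \<Rightarrow> real) \<Rightarrow> real \<Rightarrow> ((real^'n) \<times> real) set" where
  "Xlam a R tc lam = Xset a R tc \<inter> (UNIV \<times> {lam..2*lam})"

definition Fam :: "('n \<Rightarrow> real) \<Rightarrow> real \<Rightarrow> (int^'n \<Rightarrow> real) \<Rightarrow> real \<Rightarrow> ((real^'n) \<times> real) set set" where
  "Fam a R tc eta = {Q \<in> lattice_cubes.
      eta \<le> real (card {y. norm (ivec y) < R \<and> Q = Qt a R tc y}) \<and>
      real (card {y. norm (ivec y) < R \<and> Q = Qt a R tc y}) < 2 * eta}"

definition Xlameta :: "('n \<Rightarrow> real) \<Rightarrow> real \<Rightarrow> (int^'n \<Rightarrow> real) \<Rightarrow> real \<Rightarrow> real \<Rightarrow> ((real^'n) \<times> real) set" where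
  "Xlameta a R tc lam eta = Xlam a R tc lam \<inter> \<Union>(Fam a R tc eta)"

definition density :: "((real^'n) \<times> real) set \<Rightarrow> real \<Rightarrow> real \<Rightarrow> real" where
  "density Y \<beta> R = Sup {real (card {Q \<in> lattice_cubes. Q \<subseteq> Y \<and> Q \<subseteq> ball c r}) / r powr \<beta> | c r.
      r \<ge> 1 \<and> ball c r \<subseteq> ball 0 R}"

end

theory Submission
  imports Defs "HOL-Library.FuncSet"
begin


lemma cube_eq:
  assumes "p \<in> lattice_cube m" shows "m = ((\<chi> i. \<lfloor>fst p $ i\<rfloor>), \<lfloor>snd p\<rfloor>)"
proof -
  have "fst m = (\<chi> i. \<lfloor>fst p $ i\<rfloor>)"
    using assms by (auto simp: vec_eq_iff lattice_cube_def intro!: floor_unique[symmetric])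
  moreover have "snd m = \<lfloor>snd p\<rfloor>"
    using assms by (auto simp: lattice_cube_def intro!: floor_unique[symmetric])
  ultimately show ?thesis by (metis prod.collapse)
qed

lemma cube_disj: "p \<in> lattice_cube m \<Longrightarrow> p \<in> lattice_cube m' \<Longrightarrow> m = m'"
  using cube_eq by metis

lemma in_cube_of: "p \<in> cube_of p"
  unfolding cube_of_def lattice_cube_def by auto

lemma cube_ne: "(ivec (fst m), real_of_int (snd m)) \<in> lattice_cube m"
  unfolding lattice_cube_def ivec_def by auto

lemma int_interval_card:
  fixes x \<rho> :: real assumes "\<rho> \<ge> 0"
  shows "finite {k::int. \<bar>real_of_int k - x\<bar> < \<rho>} \<and> real (card {k::int. \<bar>real_of_int k - x\<bar> < \<rho>}) \<le> 2*\<rho>+1"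
proof -
  have sub: "{k::int. \<bar>real_of_int k - x\<bar> < \<rho>} \<subseteq> {\<lceil>x-\<rho>\<rceil>..\<lfloor>x+\<rho>\<rfloor>}"
    by (auto simp: abs_less_iff ceiling_le_iff le_floor_iff)
  have "real (card {\<lceil>x-\<rho>\<rceil>..\<lfloor>x+\<rho>\<rfloor>}) \<le> 2*\<rho>+1"
  proof (cases "\<lceil>x-\<rho>\<rceil> \<le> \<lfloor>x+\<rho>\<rfloor>")
    case True
    have "real (card {\<lceil>x-\<rho>\<rceil>..\<lfloor>x+\<rho>\<rfloor>}) = real_of_int (\<lfloor>x+\<rho>\<rfloor> - \<lceil>x-\<rho>\<rceil> + 1)"
      using True by simp
    also have "\<dots> \<le> 2*\<rho>+1" using of_int_floor_le[of "x+\<rho>"] le_of_int_ceiling[of "x-\<rho>"] by linarith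
    finally show ?thesis .
  next
    case False then show ?thesis using assms by simp
  qed
  then show ?thesis using sub card_mono[OF _ sub] by (meson finite_atLeastAtMost_int finite_subset le_trans of_nat_le_iff order.trans)
qed

lemma box_card:
  fixes w :: "real^'n::finite" and \<rho> :: real assumes "\<rho> \<ge> 0"
  shows "finite {z::int^'n. \<forall>i. \<bar>real_of_int (z$i) - w$i\<bar> < \<rho>} \<and>
    real (card {z::int^'n. \<forall>i. \<bar>real_of_int (z$i) - w$i\<bar> < \<rho>}) \<le> (2*\<rho>+1) ^ CARD('n)"
proof -
  define A where "A i = {k::int. \<bar>real_of_int k - w$i\<bar> < \<rho>}" for i
  have eq: "{z::int^'n. \<forall>i. \<bar>real_of_int (z$i) - w$i\<bar> < \<rho>} = vec_lambda ` (PiE UNIV A)"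
  proof (intro set_eqI iffI)
    fix z :: "int^'n" assume "z \<in> {z::int^'n. \<forall>i. \<bar>real_of_int (z$i) - w$i\<bar> < \<rho>}"
    then have "vec_nth z \<in> PiE UNIV A" by (auto simp: A_def PiE_UNIV_domain)
    then show "z \<in> vec_lambda ` (PiE UNIV A)" by (metis image_eqI vec_nth_inverse)
  next
    fix z :: "int^'n" assume "z \<in> vec_lambda ` (PiE UNIV A)"
    then show "z \<in> {z::int^'n. \<forall>i. \<bar>real_of_int (z$i) - w$i\<bar> < \<rho>}" by (auto simp: A_def PiE_UNIV_domain)
  qed
  have fA: "finite (A i)" for i using int_interval_card[OF assms] A_def by simp
  have inj: "inj_on vec_lambda (PiE UNIV A)" by (auto simp: inj_on_def)
  have "card (vec_lambda ` (PiE UNIV A)) = (\<Prod>i\<in>UNIV. card (A i))"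
    using card_image[OF inj] card_PiE[of UNIV A] by simp
  moreover have "real (\<Prod>i\<in>UNIV. card (A i)) \<le> (2*\<rho>+1) ^ CARD('n)"
  proof -
    have "real (\<Prod>i\<in>UNIV. card (A i)) = (\<Prod>i\<in>UNIV. real (card (A i)))" by simp
    also have "\<dots> \<le> (\<Prod>i\<in>(UNIV::'n set). 2*\<rho>+1)"
      by (rule prod_mono) (use int_interval_card[OF assms] A_def in auto)
    finally show ?thesis by simp
  qed
  moreover have "finite (vec_lambda ` (PiE UNIV A))" using fA by (simp add: finite_PiE)
  ultimately show ?thesis using eq by simp
qed



lemma xi_bound:
  fixes a lam xi :: real assumes "lam \<ge> 1" "lam \<le> xi" "xi \<le> 2*lam" "a > 0"
  shows "xi powr (a-1) \<le> 2 powr a * lam powr (a-1)"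
proof (cases "a \<ge> 1")
  case True
  have "xi powr (a-1) \<le> (2*lam) powr (a-1)" using assms True by (intro powr_mono2) auto
  also have "\<dots> = 2 powr (a-1) * lam powr (a-1)" using assms by (simp add: powr_mult)
  also have "\<dots> \<le> 2 powr a * lam powr (a-1)" by (intro mult_right_mono) auto
  finally show ?thesis .
next
  case False
  have "xi powr (a-1) \<le> lam powr (a-1)" using assms False by (intro powr_mono2') auto
  also have "\<dots> \<le> 2 powr a * lam powr (a-1)"
  proof -
    have "1 \<le> 2 powr a" using assms by (intro ge_one_powr_ge_zero) auto
    moreover have "0 \<le> lam powr (a-1)" by simp
    ultimately show ?thesis using mult_right_mono[of 1 "2 powr a" "lam powr (a-1)"] by simp
  qed
  finally show ?thesis .
qed

lemma pow_diff_bound: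
  fixes a lam u v :: real assumes "lam \<ge> 1" "lam \<le> u" "u \<le> v" "v \<le> 2*lam" "a > 0"
  shows "\<bar>v powr a - u powr a\<bar> \<le> a * 2 powr a * lam powr (a-1) * (v-u)"
proof (cases "u < v")
  case True
  have "\<exists>z. u < z \<and> z < v \<and> (v powr a - u powr a = (v - u) * (a * z powr (a-1)))"
    by (rule MVT2[OF True]) (use assms in \<open>auto intro!: has_real_derivative_powr\<close>)
  then obtain z where z: "u < z" "z < v" "v powr a - u powr a = (v - u) * (a * z powr (a-1))" by blast
  have "z powr (a-1) \<le> 2 powr a * lam powr (a-1)" using z assms by (intro xi_bound) auto
  then have "(v - u) * (a * z powr (a-1)) \<le> (v-u) * (a * (2 powr a * lam powr (a-1)))"
    using True assms by (intro mult_left_mono) auto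
  moreover have "(v - u) * (a * z powr (a-1)) \<ge> 0" using True assms by simp
  ultimately show ?thesis using z(3) by (simp add: algebra_simps)
next
  case False then show ?thesis using assms by simp
qed

lemma R_compare:
  fixes a al lam R :: real assumes "1 \<le> lam" "lam \<le> R" "al \<le> a"
  shows "R powr (1-2*a) * lam powr (a-1) \<le> R powr (1-2*al) * lam powr (al-1)"
proof -
  have "R powr (1-2*a) * lam powr (a-1) = exp ((1-2*a) * ln R + (a-1) * ln lam)"
    using assms by (simp add: powr_def exp_add)
  also have "\<dots> \<le> exp ((1-2*al) * ln R + (al-1) * ln lam)"
  proof -
    have "ln lam \<le> ln R" "0 \<le> ln lam" using assms by auto
    moreover have "0 \<le> ln R" using assms by auto
    ultimately have "ln lam - 2 * ln R \<le> 0" by linarith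
    moreover have "a - al \<ge> 0" using assms by simp
    ultimately have "(a - al) * (ln lam - 2 * ln R) \<le> 0" by (simp add: mult_nonneg_nonpos)
    then show ?thesis by (simp add: algebra_simps)
  qed
  also have "\<dots> = R powr (1-2*al) * lam powr (al-1)"
    using assms by (simp add: powr_def exp_add)
  finally show ?thesis .
qed

lemma theta_lip1:
  fixes a al lam R t t' :: real assumes "1 \<le> lam" "lam \<le> R" "al \<le> a" "a > 0"
    "t \<in> {lam..2*lam}" "t' \<in> {lam..2*lam}"
  shows "\<bar>R powr (1-2*a) * t powr a - R powr (1-2*a) * t' powr a\<bar>
     \<le> a * 2 powr a * (R powr (1-2*al) * lam powr (al-1)) * \<bar>t - t'\<bar>"
proof -
  have gen: "\<bar>t powr a - t' powr a\<bar> \<le> a * 2 powr a * lam powr (a-1) * \<bar>t - t'\<bar>"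
  proof (cases "t' \<le> t")
    case True then show ?thesis using pow_diff_bound[of lam t' t a] assms by simp
  next
    case False then show ?thesis using pow_diff_bound[of lam t t' a] assms by (simp add: abs_minus_commute)
  qed
  have "\<bar>R powr (1-2*a) * t powr a - R powr (1-2*a) * t' powr a\<bar> = R powr (1-2*a) * \<bar>t powr a - t' powr a\<bar>"
    by (simp add: abs_mult flip: right_diff_distrib)
  also have "\<dots> \<le> R powr (1-2*a) * (a * 2 powr a * lam powr (a-1) * \<bar>t - t'\<bar>)"
    by (intro mult_left_mono gen) auto
  also have "\<dots> = a * 2 powr a * \<bar>t - t'\<bar> * (R powr (1-2*a) * lam powr (a-1))" by (simp add: algebra_simps)
  also have "\<dots> \<le> a * 2 powr a * \<bar>t - t'\<bar> * (R powr (1-2*al) * lam powr (al-1))"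
    using assms by (intro mult_left_mono R_compare) auto
  finally show ?thesis by (simp add: algebra_simps)
qed



theorem lemma3p7:
  fixes a :: "'n::finite \<Rightarrow> real"
  assumes "\<forall>i. a i > 0" and "Min (range a) < 1/2"
  shows "\<exists>C>0. \<forall>(R::real) (g::real^'n \<Rightarrow> complex) (tc::int^'n \<Rightarrow> real) (lam::real) (eta::real).
    R \<ge> 1 \<longrightarrow>
    g \<in> borel_measurable lebesgue \<longrightarrow>
    integrable lebesgue (\<lambda>\<xi>. (norm (g \<xi>))^2) \<longrightarrow>
    (\<forall>\<xi>. \<xi> \<notin> ball 0 1 \<longrightarrow> g \<xi> = 0) \<longrightarrow>
    good_choice a R g tc \<longrightarrow>
    (\<exists>k::nat. lam = 2^k) \<longrightarrow> 1 \<le> lam \<longrightarrow> lam \<le> R \<longrightarrow>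
    (\<exists>k::nat. eta = 2^k) \<longrightarrow>
    density (Xlameta a R tc lam eta) (real CARD('n)) R
      \<le> C * (1 / eta) * max 1 (R powr (1 - 2 * Min (range a)) * lam powr (Min (range a) - 1))"
proof -
  define al where "al = Min (range a)"
  have al_le: "al \<le> a i" for i unfolding al_def by (rule Min_le) auto
  define K where "K = (\<Sum>i\<in>UNIV. a i * 2 powr a i)"
  have apos: "a i > 0" for i using assms(1) by auto
  have K_ge: "a i * 2 powr a i \<le> K" for i
    unfolding K_def by (rule member_le_sum) (use apos in \<open>auto intro: less_imp_le\<close>)
  have Kpos: "K > 0" using K_ge[of undefined] apos[of undefined]
    by (smt (verit) mult_pos_pos powr_gt_zero)
  define N where "N = CARD('n)"
  define C where "C = (2*K+1) * 5^N"
  have Cpos: "C > 0" unfolding C_def using Kpos by simp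
  show ?thesis
  proof (intro exI[of _ C] conjI allI impI Cpos)
    fix R :: real and g :: "real^'n \<Rightarrow> complex" and tc :: "int^'n \<Rightarrow> real" and lam eta :: real
    assume R1: "R \<ge> 1" and gc: "good_choice a R g tc" and lam1: "1 \<le> lam" and lamR: "lam \<le> R"
      and eta2: "\<exists>k::nat. eta = 2^k"
    have eta1: "eta \<ge> 1" using eta2 by auto
    define M where "M = max 1 (R powr (1 - 2 * al) * lam powr (al - 1))"
    have M1: "M \<ge> 1" unfolding M_def by simp
    have lip: "\<bar>theta a R t $ i - theta a R t' $ i\<bar> \<le> K * M * \<bar>t - t'\<bar>"
      if "t \<in> {lam..2*lam}" "t' \<in> {lam..2*lam}" for t t' i
    proof -
      have "\<bar>theta a R t $ i - theta a R t' $ i\<bar>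
         \<le> a i * 2 powr a i * (R powr (1-2*al) * lam powr (al-1)) * \<bar>t - t'\<bar>"
        unfolding theta_def using theta_lip1[OF lam1 lamR al_le apos that] by simp
      also have "\<dots> \<le> K * M * \<bar>t - t'\<bar>"
        by (intro mult_right_mono mult_mono K_ge) (auto simp: M_def less_imp_le[OF apos] Kpos less_imp_le[OF Kpos])
      finally show ?thesis .
    qed
    define P where "P y = (ivec y + theta a R (tc y), tc y)" for y
    have bound: "real (card {Q \<in> lattice_cubes. Q \<subseteq> Xlameta a R tc lam eta \<and> Q \<subseteq> ball c r}) / r powr real N
        \<le> C * (1 / eta) * M" if r1: "r \<ge> 1" for c r
    proof -
      define S where "S = {Q \<in> lattice_cubes. Q \<subseteq> Xlameta a R tc lam eta \<and> Q \<subseteq> ball c r}"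
      define Y where "Y Q = {y. norm (ivec y) < R \<and> Q = Qt a R tc y}" for Q
      define W where "W = {y. norm (ivec y) < R \<and> P y \<in> ball c r \<and> tc y \<in> {lam..2*lam}}"
      have claimA: "eta \<le> real (card (Y Q))" if "Q \<in> S" for Q
      proof -
        obtain m where m: "Q = lattice_cube m" using \<open>Q \<in> S\<close> unfolding S_def lattice_cubes_def by auto
        have "(ivec (fst m), real_of_int (snd m)) \<in> \<Union>(Fam a R tc eta)"
          using cube_ne[of m] \<open>Q \<in> S\<close> m unfolding S_def Xlameta_def by auto
        then obtain F where F: "F \<in> Fam a R tc eta" "(ivec (fst m), real_of_int (snd m)) \<in> F" by auto
        then obtain m' where m': "F = lattice_cube m'" unfolding Fam_def lattice_cubes_def by auto
        have "m = m'" using cube_disj[OF cube_ne[of m]] F m' by auto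
        then have "Q \<in> Fam a R tc eta" using F m m' by simp
        then show ?thesis unfolding Fam_def Y_def by auto
      qed
      have claimB: "Y Q \<subseteq> W" if "Q \<in> S" for Q
      proof
        fix y assume y: "y \<in> Y Q"
        have Q: "Q = cube_of (P y)" using y unfolding Y_def Qt_def P_def by auto
        have "P y \<in> Q" using Q in_cube_of by simp
        moreover have "Q \<subseteq> ball c r" "Q \<subseteq> UNIV \<times> {lam..2*lam}"
          using \<open>Q \<in> S\<close> unfolding S_def Xlameta_def Xlam_def by auto
        ultimately show "y \<in> W" using y unfolding W_def Y_def by (auto simp: P_def)
      qed
      have finW: "finite W"
      proof -
        have "W \<subseteq> {z::int^'n. \<forall>i. \<bar>real_of_int (z$i) - (0::real^'n)$i\<bar> < R}"
        proof
          fix z assume "z \<in> W"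
          then have "norm (ivec z) < R" unfolding W_def by auto
          then show "z \<in> {z::int^'n. \<forall>i. \<bar>real_of_int (z$i) - (0::real^'n)$i\<bar> < R}"
          proof (intro CollectI allI)
            fix i
            have "\<bar>ivec z $ i\<bar> \<le> norm (ivec z)" by (rule component_le_norm_cart)
            moreover have "ivec z $ i = real_of_int (z$i)" by (simp add: ivec_def)
            ultimately show "\<bar>real_of_int (z$i) - (0::real^'n)$i\<bar> < R" using \<open>norm (ivec z) < R\<close> by simp
          qed
        qed
        then show ?thesis using box_card[of R 0] R1 finite_subset by auto
      qed
      have finS: "finite S"
      proof -
        have "S \<subseteq> Qt a R tc ` W"
        proof
          fix Q assume Q: "Q \<in> S"
          have "card (Y Q) \<noteq> 0" using claimA[OF Q] eta1 by auto
          then obtain y where "y \<in> Y Q" by fastforce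
          then show "Q \<in> Qt a R tc ` W" using claimB[OF Q] unfolding Y_def by auto
        qed
        then show ?thesis using finW finite_surj by blast
      qed
      have "eta * real (card S) \<le> real (card W)"
      proof -
        have "eta * real (card S) = (\<Sum>Q\<in>S. eta)" by simp
        also have "\<dots> \<le> (\<Sum>Q\<in>S. real (card (Y Q)))" by (intro sum_mono claimA)
        also have "\<dots> = real (card (\<Union>Q\<in>S. Y Q))"
        proof (subst card_UN_disjoint)
          show "\<forall>Q\<in>S. finite (Y Q)" using claimB finW finite_subset by blast
        qed (use finS in \<open>auto simp: Y_def\<close>)
        also have "\<dots> \<le> real (card W)" using claimB finW by (intro of_nat_mono card_mono) auto
        finally show ?thesis .
      qed
      moreover have "real (card W) \<le> (2*K*M+1) * (4*r+1)^N"
      proof -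
        define s where "s = r / (K*M)"
        have spos: "s > 0" unfolding s_def using Kpos M1 r1 by simp
        have KMs: "K * M * s = r" unfolding s_def using Kpos M1 by simp
        define b where "b = snd c - r"
        define kk where "kk y = nat \<lfloor>(tc y - b) / s\<rfloor>" for y
        define Ks where "Ks = {0..nat \<lfloor>2*K*M\<rfloor>}"
        define F where "F k = {y \<in> W. kk y = k}" for k
        have Wfacts: "\<bar>tc y - snd c\<bar> < r" "\<bar>real_of_int (y$i) + theta a R (tc y) $ i - fst c $ i\<bar> < r"
          "tc y \<in> {lam..2*lam}" if "y \<in> W" for y i
        proof -
          have d: "dist c (P y) < r" using that unfolding W_def by auto
          have "dist (snd c) (snd (P y)) < r" using d dist_snd_le[of c "P y"] by linarith
          then show "\<bar>tc y - snd c\<bar> < r" by (simp add: P_def dist_real_def abs_minus_commute)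
          have "dist (fst c) (fst (P y)) < r" using d dist_fst_le[of c "P y"] by linarith
          then have "norm (fst (P y) - fst c) < r" by (simp add: dist_norm norm_minus_commute)
          moreover have "\<bar>(fst (P y) - fst c) $ i\<bar> \<le> norm (fst (P y) - fst c)" by (rule component_le_norm_cart)
          ultimately show "\<bar>real_of_int (y$i) + theta a R (tc y) $ i - fst c $ i\<bar> < r"
            by (simp add: P_def ivec_def)
          show "tc y \<in> {lam..2*lam}" using that unfolding W_def by auto
        qed
        have WK: "W \<subseteq> (\<Union>k\<in>Ks. F k)"
        proof
          fix y assume y: "y \<in> W"
          have "0 \<le> (tc y - b) / s" using Wfacts(1)[OF y] spos unfolding b_def by simp
          have "(tc y - b) / s \<le> 2*K*M"
          proof -
            have "tc y - b \<le> 2 * r" using Wfacts(1)[OF y] unfolding b_def by simp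
            then have "(tc y - b) / s \<le> 2 * r / s" using spos by (simp add: divide_right_mono)
            also have "2 * r / s = 2*K*M" using KMs spos by (simp add: field_simps)
            finally show ?thesis .
          qed
          then have "kk y \<in> Ks" unfolding kk_def Ks_def by (simp add: floor_mono nat_mono)
          then show "y \<in> (\<Union>k\<in>Ks. F k)" using y unfolding F_def by auto
        qed
        have Fk: "real (card (F k)) \<le> (4*r+1)^N" for k
        proof (cases "F k = {}")
          case True then show ?thesis using r1 by simp
        next
          case False
          then obtain y0 where y0: "y0 \<in> F k" by auto
          define w where "w = fst c - theta a R (tc y0)"
          have "F k \<subseteq> {z::int^'n. \<forall>i. \<bar>real_of_int (z$i) - w$i\<bar> < 2*r}"
          proof (intro subsetI CollectI allI)
            fix y i assume y: "y \<in> F k"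
            have yW: "y \<in> W" and y0W: "y0 \<in> W" using y y0 unfolding F_def by auto
            have nn: "0 \<le> (tc y - b) / s" "0 \<le> (tc y0 - b) / s"
              using Wfacts(1)[OF yW] Wfacts(1)[OF y0W] spos unfolding b_def by auto
            have "nat \<lfloor>(tc y - b) / s\<rfloor> = nat \<lfloor>(tc y0 - b) / s\<rfloor>"
              using y y0 unfolding F_def kk_def by auto
            moreover have "0 \<le> \<lfloor>(tc y - b) / s\<rfloor>" "0 \<le> \<lfloor>(tc y0 - b) / s\<rfloor>" using nn by auto
            ultimately have "\<lfloor>(tc y - b) / s\<rfloor> = \<lfloor>(tc y0 - b) / s\<rfloor>" by (metis eq_nat_nat_iff)
            then have "\<bar>(tc y - b) / s - (tc y0 - b) / s\<bar> < 1"
              using of_int_floor_le[of "(tc y - b) / s"] of_int_floor_le[of "(tc y0 - b) / s"]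
                real_of_int_floor_add_one_gt[of "(tc y - b) / s"] real_of_int_floor_add_one_gt[of "(tc y0 - b) / s"]
              by linarith
            then have "\<bar>tc y - tc y0\<bar> / s < 1" using spos by (simp add: diff_divide_distrib[symmetric])
            then have "\<bar>tc y - tc y0\<bar> \<le> s" using spos by (simp add: field_simps)
            then have "\<bar>theta a R (tc y) $ i - theta a R (tc y0) $ i\<bar> \<le> K * M * s"
            proof -
              have "K * M * \<bar>tc y - tc y0\<bar> \<le> K * M * s"
                using \<open>\<bar>tc y - tc y0\<bar> \<le> s\<close> Kpos M1 by (intro mult_left_mono) auto
              then show ?thesis using lip[OF Wfacts(3)[OF yW] Wfacts(3)[OF y0W], of i] by linarith
            qed
            then show "\<bar>real_of_int (y$i) - w$i\<bar> < 2*r"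
              using Wfacts(2)[OF yW, of i] KMs unfolding w_def by simp
          qed
          moreover have "2*r \<ge> 0" using r1 by simp
          ultimately have "finite {z::int^'n. \<forall>i. \<bar>real_of_int (z$i) - w$i\<bar> < 2*r}"
            "real (card {z::int^'n. \<forall>i. \<bar>real_of_int (z$i) - w$i\<bar> < 2*r}) \<le> (2*(2*r)+1)^N"
            using box_card[of "2*r" w] unfolding N_def by auto
          moreover have "card (F k) \<le> card {z::int^'n. \<forall>i. \<bar>real_of_int (z$i) - w$i\<bar> < 2*r}"
            by (rule card_mono) fact+
          ultimately show ?thesis by (smt (verit) of_nat_le_iff)
        qed
        have "real (card W) \<le> real (card (\<Union>k\<in>Ks. F k))"
          using WK by (intro of_nat_mono card_mono) (auto simp: Ks_def F_def finW)
        also have "\<dots> \<le> real (\<Sum>k\<in>Ks. card (F k))" by (intro of_nat_mono card_UN_le) (simp add: Ks_def)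
        also have "\<dots> = (\<Sum>k\<in>Ks. real (card (F k)))" by simp
        also have "\<dots> \<le> (\<Sum>k\<in>Ks. (4*r+1)^N)" by (intro sum_mono Fk)
        also have "\<dots> = real (card Ks) * (4*r+1)^N" by simp
        also have "\<dots> \<le> (2*K*M+1) * (4*r+1)^N"
        proof (intro mult_right_mono)
          have "real (card Ks) = real (nat \<lfloor>2*K*M\<rfloor>) + 1" unfolding Ks_def by simp
          also have "\<dots> \<le> 2*K*M+1" using Kpos M1 by simp
          finally show "real (card Ks) \<le> 2*K*M+1" .
        qed (use r1 in auto)
        finally show ?thesis .
      qed
      moreover have "(2*K*M+1) * (4*r+1)^N \<le> ((2*K+1)*M) * (5*r)^N"
      proof (intro mult_mono power_mono)
        show "2*K*M+1 \<le> (2*K+1)*M" using M1 by (simp add: algebra_simps)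
      qed (use r1 Kpos M1 in auto)
      ultimately have "eta * real (card S) \<le> C * M * r^N" unfolding C_def by (simp add: power_mult_distrib algebra_simps)
      then have "real (card S) \<le> C * M * r^N / eta" using eta1 by (simp add: pos_le_divide_eq mult.commute)
      also have "\<dots> = (C * (1/eta) * M) * r^N" by simp
      finally have cs: "real (card S) \<le> (C * (1/eta) * M) * r^N" .
      have "r^N > 0" using r1 by simp
      then have "real (card S) / r^N \<le> C * (1/eta) * M" using cs by (simp add: divide_le_eq)
      then show ?thesis using r1 powr_realpow[of r N] unfolding S_def by simp
    qed
    show "density (Xlameta a R tc lam eta) (real CARD('n)) R
      \<le> C * (1 / eta) * max 1 (R powr (1 - 2 * Min (range a)) * lam powr (Min (range a) - 1))"
      unfolding density_def
    proof (rule cSup_least)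
      show "{real (card {Q \<in> lattice_cubes. Q \<subseteq> Xlameta a R tc lam eta \<and> Q \<subseteq> ball c r}) / r powr real CARD('n) |c r.
        1 \<le> r \<and> ball c r \<subseteq> ball 0 R} \<noteq> {}"
      proof -
        have "ball (0::(real^'n)\<times>real) 1 \<subseteq> ball 0 R" using R1 by (rule subset_ball)
        then show ?thesis by blast
      qed
    qed (use bound in \<open>auto simp: M_def al_def N_def\<close>)
  qed
qed

end
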